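(* Let $\tau=\tau_1\ldots\tau_k\in\mathcal{S}_k$ and $0\le j\le k\le n$. The number of involutions $\pi\in\mathcal{S}_n$ that contain $\tau$ as a subsequence and that map exactly $j$ elements of $[k]$ into $[k]$ equals $\binom{n-k}{k-j}t_{n-2k+j}$ if either $j=0$ or the pattern of $\tau_1\ldots\tau_j$ is an involution in $\mathcal{S}_j$, and equals $0$ otherwise.
   Context: $[k]=\{1,\ldots,k\}$. $t_m$ denotes the number of involutions in $\mathcal{S}_m$ ($t_0=1$); when $k-j>n-k$ the binomial coefficient is $0$ and the term is $0$. A permutation $\pi=\pi_1\ldots\pi_n$ contains $\tau$ as a subsequence if there are indices $i_1<\cdots<i_k$ with $\pi_{i_r}=\tau_r$ for all $r$. The pattern of a word of $j$ distinct letters is the word obtained by the order-preserving relabeling of its letters by $[j]$. *)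

theory Defs
  imports "HOL-Combinatorics.Permutations"
begin

text \<open>Permutations of [n] are functions nat => nat that permute {1..n}.\<close>

definition involution :: "(nat \<Rightarrow> nat) \<Rightarrow> bool" where
  "involution p \<longleftrightarrow> p \<circ> p = id"

definition num_inv :: "nat \<Rightarrow> nat" where
  "num_inv m = card {p. p permutes {1..m} \<and> involution p}"

definition contains_subseq :: "nat \<Rightarrow> (nat \<Rightarrow> nat) \<Rightarrow> nat \<Rightarrow> (nat \<Rightarrow> nat) \<Rightarrow> bool" where
  "contains_subseq n p k tau \<longleftrightarrow>
     (\<exists>idx :: nat \<Rightarrow> nat. strict_mono_on {1..k} idx \<and> idx ` {1..k} \<subseteq> {1..n} \<and>
        (\<forall>r\<in>{1..k}. p (idx r) = tau r))"

text \<open>Pattern (order-preserving relabeling by [j]) of the word w_1 ... w_j of distinct letters,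
  extended by the identity outside {1..j}.\<close>
definition pattern :: "nat \<Rightarrow> (nat \<Rightarrow> nat) \<Rightarrow> nat \<Rightarrow> nat" where
  "pattern j w r = (if r \<in> {1..j} then card {s \<in> {1..j}. w s \<le> w r} else r)"

end

theory Submission
  imports Defs
begin

definition rank :: "nat set \<Rightarrow> nat \<Rightarrow> nat" where
  "rank X x = card {y\<in>X. y \<le> x}"

lemma rank_le: "finite X \<Longrightarrow> x \<le> y \<Longrightarrow> rank X x \<le> rank X y"
  unfolding rank_def by (rule card_mono) auto

lemma rank_less: "finite X \<Longrightarrow> y \<in> X \<Longrightarrow> x < y \<Longrightarrow> rank X x < rank X y"
  unfolding rank_def
proof (rule psubset_card_mono)
  assume a: "finite X" "y \<in> X" "x < y"
  show "{y \<in> X. y \<le> x} \<subset> {ya \<in> X. ya \<le> y}"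
  proof
    show "{y \<in> X. y \<le> x} \<subseteq> {ya \<in> X. ya \<le> y}" using a by auto
    show "{y \<in> X. y \<le> x} \<noteq> {ya \<in> X. ya \<le> y}" using a by (metis (no_types, lifting) mem_Collect_eq order_refl not_le)
  qed
qed (simp)

lemma rank_inj: "finite X \<Longrightarrow> inj_on (rank X) X"
proof (rule inj_onI)
  fix x y assume "finite X" "x \<in> X" "y \<in> X" "rank X x = rank X y"
  then show "x = y" by (metis linorder_neqE_nat rank_less less_irrefl)
qed

lemma rank_range: "finite X \<Longrightarrow> x \<in> X \<Longrightarrow> rank X x \<in> {1..card X}"
proof -
  assume a: "finite X" "x \<in> X"
  have "{y\<in>X. y \<le> x} \<noteq> {}" using a by auto
  then have "card {y\<in>X. y \<le> x} \<ge> 1" using a by (simp add: Suc_leI card_gt_0_iff)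
  moreover have "card {y\<in>X. y \<le> x} \<le> card X" using a by (intro card_mono) auto
  ultimately show ?thesis unfolding rank_def by auto
qed

lemma rank_image: "finite X \<Longrightarrow> rank X ` X = {1..card X}"
proof -
  assume f: "finite X"
  have "rank X ` X \<subseteq> {1..card X}" using rank_range[OF f] by auto
  moreover have "card (rank X ` X) = card {1..card X}"
    using card_image[OF rank_inj[OF f]] by simp
  ultimately show ?thesis by (intro card_subset_eq) auto
qed

definition enum :: "nat set \<Rightarrow> nat \<Rightarrow> nat" where
  "enum X = the_inv_into X (rank X)"

lemma enum_in: "finite X \<Longrightarrow> i \<in> {1..card X} \<Longrightarrow> enum X i \<in> X"
  unfolding enum_def by (metis rank_image rank_inj the_inv_into_into order_refl)

lemma rank_enum: "finite X \<Longrightarrow> i \<in> {1..card X} \<Longrightarrow> rank X (enum X i) = i"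
  unfolding enum_def by (metis rank_image rank_inj f_the_inv_into_f)

lemma enum_rank: "finite X \<Longrightarrow> x \<in> X \<Longrightarrow> enum X (rank X x) = x"
  unfolding enum_def by (metis rank_inj the_inv_into_f_f)

lemma enum_less: "finite X \<Longrightarrow> a \<in> {1..card X} \<Longrightarrow> b \<in> {1..card X} \<Longrightarrow> a < b \<Longrightarrow> enum X a < enum X b"
  by (metis rank_enum rank_le not_le leD)

lemma rank_transfer:
  assumes f: "finite X" and m: "strict_mono_on X f" and x: "x \<in> X"
  shows "rank (f ` X) (f x) = rank X x"
proof -
  have inj: "inj_on f X" using m by (rule strict_mono_on_imp_inj_on)
  have "{y\<in>f ` X. y \<le> f x} = f ` {z\<in>X. z \<le> x}"
  proof (intro equalityI subsetI)
    fix y assume "y \<in> {y\<in>f ` X. y \<le> f x}"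
    then obtain z where z: "z \<in> X" "y = f z" "f z \<le> f x" by auto
    have "z \<le> x"
    proof (rule ccontr)
      assume "\<not> z \<le> x" then have "x < z" by simp
      then have "f x < f z" using m x z(1) unfolding strict_mono_on_def by auto
      then show False using z(3) by simp
    qed
    then show "y \<in> f ` {z\<in>X. z \<le> x}" using z by auto
  next
    fix y assume "y \<in> f ` {z\<in>X. z \<le> x}"
    then obtain z where z: "z \<in> X" "y = f z" "z \<le> x" by auto
    have "f z \<le> f x"
      using m x z unfolding strict_mono_on_def by (cases "z = x") (auto intro: less_imp_le)
    then show "y \<in> {y\<in>f ` X. y \<le> f x}" using z by auto
  qed
  then have "rank (f ` X) (f x) = card (f ` {z\<in>X. z \<le> x})" unfolding rank_def by simp
  also have "\<dots> = rank X x" unfolding rank_def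
    by (rule card_image) (rule inj_on_subset[OF inj], auto)
  finally show ?thesis .
qed

lemma rank_interval: "a \<le> i \<Longrightarrow> i \<le> b \<Longrightarrow> rank {a..b} i = i + 1 - a"
proof -
  assume "a \<le> i" "i \<le> b"
  then have "{y\<in>{a..b}. y \<le> i} = {a..i}" by auto
  then show ?thesis unfolding rank_def by simp
qed

lemma inv_pp: "involution p \<Longrightarrow> p (p x) = x"
  unfolding involution_def by (metis comp_apply id_apply)

lemma inv_permutes: "involution p \<Longrightarrow> \<forall>x. x \<notin> S \<longrightarrow> p x = x \<Longrightarrow> p permutes S"
  unfolding permutes_def by (metis inv_pp)

lemma inv_inj: "involution p \<Longrightarrow> inj p"
  by (metis inv_pp injI)

lemma inv_in: "involution p \<Longrightarrow> \<forall>x. x \<notin> S \<longrightarrow> p x = x \<Longrightarrow> y \<in> S \<Longrightarrow> p y \<in> S"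
  by (metis inv_pp)

lemma involutionI: "(\<And>x. p (p x) = x) \<Longrightarrow> involution p"
  unfolding involution_def by auto

lemma downclosed:
  assumes "M \<subseteq> {1..k}" "card M = j" "\<And>i i'. i \<in> M \<Longrightarrow> 1 \<le> i' \<Longrightarrow> i' \<le> i \<Longrightarrow> i' \<in> M"
  shows "M = {1..j::nat}"
proof -
  have fin: "finite M" using assms(1) finite_subset by blast
  have "M \<subseteq> {1..j}"
  proof
    fix i assume i: "i \<in> M"
    then have "{1..i} \<subseteq> M" using assms(3) by auto
    then have "card {1..i} \<le> card M" using fin by (intro card_mono) auto
    then show "i \<in> {1..j}" using i assms(1,2) by auto
  qed
  then show ?thesis using assms(2) by (intro card_subset_eq) auto
qed


locale pctx =
  fixes n k j :: nat and tau :: "nat \<Rightarrow> nat"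
  assumes tau: "tau permutes {1..k}" and jk: "j \<le> k" and kn: "k \<le> n"
begin

abbreviation "A \<equiv> tau ` {1..j}"
abbreviation "R \<equiv> tau ` {j+1..k}"
abbreviation "U \<equiv> {k+1..n}"

definition good :: "(nat \<Rightarrow> nat) \<Rightarrow> bool" where
  "good p \<longleftrightarrow> involution p \<and> (\<forall>x. x \<notin> {1..n} \<longrightarrow> p x = x) \<and>
     strict_mono_on {1..k} (p \<circ> tau) \<and> card {x\<in>{1..k}. p x \<in> {1..k}} = j"

lemma tau_inj: "inj tau" using tau by (rule permutes_inj)
lemma tau_K: "tau ` {1..k} = {1..k}" using tau by (rule permutes_image)
lemma tau_in: "i \<in> {1..k} \<Longrightarrow> tau i \<in> {1..k}" using tau_K by blast
lemma tau_surj: "x \<in> {1..k} \<Longrightarrow> \<exists>i\<in>{1..k}. tau i = x" using tau_K by (metis imageE)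
lemma tau_inv: "inv tau (tau i) = i" using tau_inj by simp

lemma card_A: "card A = j"
  by (subst card_image) (auto intro: inj_on_subset[OF tau_inj])
lemma card_R: "card R = k - j"
  by (subst card_image) (auto intro: inj_on_subset[OF tau_inj])
lemma A_sub: "A \<subseteq> {1..k}" using tau_in jk by auto
lemma R_sub: "R \<subseteq> {1..k}" using tau_in by auto
lemma AR: "A \<union> R = {1..k}"
proof -
  have "{1..j} \<union> {j+1..k} = {1..k}" using jk by auto
  then show ?thesis using tau_K by (metis image_Un)
qed
lemma AR_disj: "A \<inter> R = {}" using tau_inj by (auto simp: inj_eq)

lemma good_N: "good p \<Longrightarrow> y \<in> {1..n} \<Longrightarrow> p y \<in> {1..n}"
  unfolding good_def using inv_in by blast

lemma good_pp: "good p \<Longrightarrow> p (p x) = x" unfolding good_def using inv_pp by blast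

lemma good_mono: "good p \<Longrightarrow> i \<in> {1..k} \<Longrightarrow> i' \<in> {1..k} \<Longrightarrow> i < i' \<Longrightarrow> p (tau i) < p (tau i')"
  unfolding good_def strict_mono_on_def by auto

lemma good_split:
  assumes g: "good p"
  shows "{i\<in>{1..k}. p (tau i) \<in> {1..k}} = {1..j}"
proof (rule downclosed)
  let ?M = "{i\<in>{1..k}. p (tau i) \<in> {1..k}}"
  show "?M \<subseteq> {1..k}" by auto
  have "{x\<in>{1..k}. p x \<in> {1..k}} = tau ` ?M"
  proof (intro equalityI subsetI)
    fix x assume "x \<in> {x\<in>{1..k}. p x \<in> {1..k}}"
    then show "x \<in> tau ` ?M" using tau_surj by fastforce
  qed (use tau_in in auto)
  then have "card {x\<in>{1..k}. p x \<in> {1..k}} = card ?M"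
    by (metis (no_types, lifting) card_image inj_on_subset[OF tau_inj] subset_UNIV)
  then show "card ?M = j" using g unfolding good_def by simp
  fix i i' assume i: "i \<in> ?M" and "1 \<le> i'" "i' \<le> i"
  show "i' \<in> ?M"
  proof (cases "i' = i")
    case False
    then have "i' < i" using \<open>i' \<le> i\<close> by simp
    then have "p (tau i') < p (tau i)" using good_mono[OF g] i \<open>1 \<le> i'\<close> by auto
    moreover have "p (tau i') \<in> {1..n}" using good_N[OF g] tau_in[of i'] i \<open>1 \<le> i'\<close> \<open>i' < i\<close> kn by auto
    ultimately show ?thesis using i \<open>1 \<le> i'\<close> \<open>i' < i\<close> by auto
  qed (use i in auto)
qed

lemma good_A: assumes g: "good p" and i: "i \<in> {1..j}" shows "p (tau i) \<in> A"
proof -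
  have "p (tau i) \<in> {1..k}" using good_split[OF g] i by blast
  then obtain m where m: "m \<in> {1..k}" "tau m = p (tau i)" using tau_surj by blast
  then have "p (tau m) = tau i" using good_pp[OF g] by metis
  then have "p (tau m) \<in> {1..k}" using tau_in i jk by auto
  then have "m \<in> {1..j}" using good_split[OF g] m by blast
  then show ?thesis using m(2) by (metis imageI)
qed

lemma good_R: assumes g: "good p" and i: "i \<in> {j+1..k}" shows "p (tau i) \<in> U"
proof -
  have "p (tau i) \<notin> {1..k}"
  proof
    assume "p (tau i) \<in> {1..k}"
    then have "i \<in> {i\<in>{1..k}. p (tau i) \<in> {1..k}}" using i by auto
    then have "i \<in> {1..j}" using good_split[OF g] by blast
    then show False using i by simp
  qed
  moreover have "p (tau i) \<in> {1..n}" using good_N[OF g] tau_in[of i] i kn by auto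
  ultimately show ?thesis by auto
qed

lemma good_imgA: assumes g: "good p" shows "(p \<circ> tau) ` {1..j} = A"
proof -
  have "(p \<circ> tau) ` {1..j} \<subseteq> A" using good_A[OF g] by auto
  moreover have "card ((p \<circ> tau) ` {1..j}) = card A"
    using card_A inv_inj[of p] g tau_inj unfolding good_def
    by (subst card_image) (auto intro: inj_on_subset comp_inj_on)
  ultimately show ?thesis by (intro card_subset_eq) auto
qed

lemma good_rankA: assumes g: "good p" and i: "i \<in> {1..j}" shows "rank A (p (tau i)) = i"
proof -
  have sm: "strict_mono_on {1..j} (p \<circ> tau)"
    using g jk unfolding good_def by (auto intro: monotone_on_subset)
  have "rank ((p \<circ> tau) ` {1..j}) ((p \<circ> tau) i) = rank {1..j} i"
    by (rule rank_transfer[OF _ sm i]) simp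
  then show ?thesis using good_imgA[OF g] rank_interval[of 1 i j] i by simp
qed

lemma good_rankR: assumes g: "good p" and i: "i \<in> {j+1..k}" shows "rank (p ` R) (p (tau i)) = i - j"
proof -
  have sm: "strict_mono_on {j+1..k} (p \<circ> tau)"
    using g jk unfolding good_def by (auto intro: monotone_on_subset)
  have "rank ((p \<circ> tau) ` {j+1..k}) ((p \<circ> tau) i) = rank {j+1..k} i"
    by (rule rank_transfer[OF _ sm i]) simp
  moreover have "(p \<circ> tau) ` {j+1..k} = p ` R" by (simp add: image_comp)
  ultimately show ?thesis using rank_interval[of "j+1" i k] i by simp
qed

lemma pat_rank: assumes i: "i \<in> {1..j}" shows "pattern j tau i = rank A (tau i)"
proof -
  have "{y\<in>A. y \<le> tau i} = tau ` {s\<in>{1..j}. tau s \<le> tau i}" by auto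
  then have "rank A (tau i) = card {s\<in>{1..j}. tau s \<le> tau i}"
    unfolding rank_def by (metis (no_types, lifting) card_image inj_on_subset[OF tau_inj] subset_UNIV)
  then show ?thesis using i unfolding pattern_def by simp
qed

lemma good_pattern: assumes g: "good p" shows "involution (pattern j tau)"
proof (rule involutionI)
  fix i
  show "pattern j tau (pattern j tau i) = i"
  proof (cases "i \<in> {1..j}")
    case True
    have "p (tau i) \<in> A" using good_A[OF g True] .
    then obtain m where m: "m \<in> {1..j}" "p (tau i) = tau m" by auto
    have pm: "p (tau m) = tau i" using m good_pp[OF g] by metis
    have 1: "pattern j tau m = i" using pat_rank[OF m(1)] good_rankA[OF g True] m by simp
    have 2: "pattern j tau i = m" using pat_rank[OF True] good_rankA[OF g m(1)] pm by simp
    show ?thesis using 1 2 by simp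
  next
    case False
    then have "pattern j tau i = i" unfolding pattern_def by (rule if_not_P)
    then show ?thesis by simp
  qed
qed

lemma S_good: "(p permutes {1..n} \<and> involution p \<and> contains_subseq n p k tau \<and>
                  card {x \<in> {1..k}. p x \<in> {1..k}} = j) \<longleftrightarrow> good p"
proof
  assume a: "p permutes {1..n} \<and> involution p \<and> contains_subseq n p k tau \<and>
                  card {x \<in> {1..k}. p x \<in> {1..k}} = j"
  then obtain idx where idx: "strict_mono_on {1..k} idx" "\<forall>r\<in>{1..k}. p (idx r) = tau r"
    unfolding contains_subseq_def by blast
  have "\<forall>r\<in>{1..k}. idx r = (p \<circ> tau) r" using idx(2) a inv_pp by (metis comp_apply)
  then have "strict_mono_on {1..k} (p \<circ> tau)" using idx(1) unfolding strict_mono_on_def by auto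
  then show "good p" using a unfolding good_def permutes_def by auto
next
  assume g: "good p"
  have "p permutes {1..n}" using g inv_permutes unfolding good_def by blast
  moreover have "contains_subseq n p k tau" unfolding contains_subseq_def
  proof (intro exI conjI)
    show "strict_mono_on {1..k} (p \<circ> tau)" using g unfolding good_def by blast
    show "(p \<circ> tau) ` {1..k} \<subseteq> {1..n}"
    proof
      fix x assume "x \<in> (p \<circ> tau) ` {1..k}"
      then obtain r where r: "r \<in> {1..k}" "x = p (tau r)" by auto
      have "tau r \<in> {1..n}" using tau_in[OF r(1)] kn by auto
      then show "x \<in> {1..n}" using good_N[OF g] r(2) by blast
    qed
    show "\<forall>r\<in>{1..k}. p ((p \<circ> tau) r) = tau r" using good_pp[OF g] by simp
  qed
  ultimately show "p permutes {1..n} \<and> involution p \<and> contains_subseq n p k tau \<and>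
                  card {x \<in> {1..k}. p x \<in> {1..k}} = j" using g unfolding good_def by blast
qed

end

lemma card_inv_set:
  assumes fin: "finite C"
  shows "card {q. q permutes C \<and> involution q} = num_inv (card C)"
proof -
  let ?m = "card C"
  obtain h where h: "bij_betw h {1..?m} C" using ex_bij_betw_nat_finite_1[OF fin] by blast
  define h' where "h' = the_inv_into {1..?m} h"
  have h': "bij_betw h' C {1..?m}" unfolding h'_def by (rule bij_betw_the_inv_into[OF h])
  have hin: "\<And>x. x \<in> {1..?m} \<Longrightarrow> h x \<in> C" using h by (meson bij_betwE)
  have h'in: "\<And>y. y \<in> C \<Longrightarrow> h' y \<in> {1..?m}" using h' by (meson bij_betwE)
  have hh': "\<And>y. y \<in> C \<Longrightarrow> h (h' y) = y" unfolding h'_def using h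
    by (metis bij_betw_def f_the_inv_into_f)
  have h'h: "\<And>x. x \<in> {1..?m} \<Longrightarrow> h' (h x) = x" unfolding h'_def using h
    by (meson bij_betw_def the_inv_into_f_f)
  define F where "F q = (\<lambda>x. if x \<in> {1..?m} then h' (q (h x)) else x)" for q :: "nat \<Rightarrow> nat"
  define G where "G r = (\<lambda>x. if x \<in> C then h (r (h' x)) else x)" for r :: "nat \<Rightarrow> nat"
  let ?I1 = "{q. q permutes C \<and> involution q}"
  let ?I2 = "{r. r permutes {1..?m} \<and> involution r}"
  have "bij_betw F ?I1 ?I2"
  proof (rule bij_betw_byWitness[where f' = G])
    show "\<forall>q\<in>?I1. G (F q) = q"
    proof
      fix q assume q: "q \<in> ?I1"
      show "G (F q) = q"
      proof
        fix x show "G (F q) x = q x"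
          using q hh' h'in h'h permutes_in_image[of q C] permutes_not_in[of q C]
          unfolding G_def F_def by auto
      qed
    qed
    show "\<forall>r\<in>?I2. F (G r) = r"
    proof
      fix r assume r: "r \<in> ?I2"
      show "F (G r) = r"
      proof
        fix x show "F (G r) x = r x"
          using r hin h'h permutes_in_image[of r "{1..?m}"] permutes_not_in[of r "{1..?m}"]
          unfolding G_def F_def by auto
      qed
    qed
    show "F ` ?I1 \<subseteq> ?I2"
    proof
      fix r assume "r \<in> F ` ?I1"
      then obtain q where q: "q \<in> ?I1" "r = F q" by auto
      have qq: "\<And>x. q (q x) = x" using q inv_pp by blast
      have "involution r"
      proof (rule involutionI)
        fix x show "r (r x) = x"
          using q qq hin h'in hh' h'h permutes_in_image[of q C]
          unfolding F_def by auto
      qed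
      moreover have "\<forall>x. x \<notin> {1..?m} \<longrightarrow> r x = x" using q unfolding F_def by auto
      ultimately show "r \<in> ?I2" using inv_permutes by blast
    qed
    show "G ` ?I2 \<subseteq> ?I1"
    proof
      fix q assume "q \<in> G ` ?I2"
      then obtain r where r: "r \<in> ?I2" "q = G r" by auto
      have rr: "\<And>x. r (r x) = x" using r inv_pp by blast
      have "involution q"
      proof (rule involutionI)
        fix x show "q (q x) = x"
          using r rr hin h'in hh' h'h permutes_in_image[of r "{1..?m}"]
          unfolding G_def by auto
      qed
      moreover have "\<forall>x. x \<notin> C \<longrightarrow> q x = x" using r unfolding G_def by auto
      ultimately show "q \<in> ?I1" using inv_permutes by blast
    qed
  qed
  then show ?thesis unfolding num_inv_def by (rule bij_betw_same_card)
qed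


context pctx begin

definition Phi :: "(nat \<Rightarrow> nat) \<Rightarrow> nat set \<times> (nat \<Rightarrow> nat)" where
  "Phi p = (p ` R, \<lambda>x. if x \<in> U - p ` R then p x else x)"

definition T :: "(nat set \<times> (nat \<Rightarrow> nat)) set" where
  "T = Sigma {B. B \<subseteq> U \<and> card B = k - j} (\<lambda>B. {q. q permutes (U - B) \<and> involution q})"

lemma phi_in: assumes g: "good p" shows "Phi p \<in> T"
proof -
  let ?B = "p ` R"
  let ?q = "\<lambda>x. if x \<in> U - p ` R then p x else x"
  have BU: "?B \<subseteq> U" using good_R[OF g] by auto
  have injp: "inj p" using g inv_inj unfolding good_def by blast
  have cB: "card ?B = k - j" using card_R card_image[OF inj_on_subset[OF injp]] by simp
  have closed: "p x \<in> U - ?B" if x: "x \<in> U - ?B" for x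
  proof -
    have xn: "x \<in> {1..n}" using x by auto
    have "p x \<in> {1..n}" using good_N[OF g xn] .
    moreover have "p x \<notin> {1..k}"
    proof
      assume "p x \<in> {1..k}"
      then have "p x \<in> A \<or> p x \<in> R" using AR by auto
      then show False
      proof
        assume "p x \<in> A"
        then obtain i where i: "i \<in> {1..j}" "p x = tau i" by auto
        then have "x = p (tau i)" using good_pp[OF g] by metis
        then have "x \<in> A" using good_A[OF g i(1)] by simp
        then show False using x A_sub by auto
      next
        assume "p x \<in> R"
        then have "p (p x) \<in> ?B" by blast
        then show False using x good_pp[OF g] by simp
      qed
    qed
    moreover have "p x \<notin> ?B"
    proof
      assume "p x \<in> ?B"
      then obtain r where "r \<in> R" "p x = p r" by auto
      then have "x = r" using injp by (simp add: inj_eq)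
      then show False using x \<open>r \<in> R\<close> R_sub by auto
    qed
    ultimately show ?thesis by auto
  qed
  have "involution ?q"
  proof (rule involutionI)
    fix x show "?q (?q x) = x" using closed good_pp[OF g] by auto
  qed
  then have "?q permutes (U - ?B)" using inv_permutes[of ?q] by auto
  then show ?thesis unfolding Phi_def T_def using BU cB \<open>involution ?q\<close> by auto
qed

lemma good_R_img: assumes g: "good p" and i: "i \<in> {j+1..k}" shows "p (tau i) \<in> p ` R"
  using i by auto

lemma phi_inj: "inj_on Phi (Collect good)"
proof (rule inj_onI)
  fix p1 p2 assume g1: "p1 \<in> Collect good" and g2: "p2 \<in> Collect good" and eq: "Phi p1 = Phi p2"
  then have g1: "good p1" and g2: "good p2" by auto
  define B where "B = p1 ` R"
  have B2: "p2 ` R = B" using eq unfolding Phi_def B_def by simp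
  have qeq: "\<And>x. x \<in> U - B \<Longrightarrow> p1 x = p2 x"
  proof -
    fix x assume x: "x \<in> U - B"
    have "snd (Phi p1) x = snd (Phi p2) x" using eq by simp
    then have e: "(if x \<in> U - p1 ` R then p1 x else x) = (if x \<in> U - p2 ` R then p2 x else x)"
      unfolding Phi_def by simp
    have c1: "x \<in> U - p1 ` R" using x unfolding B_def .
    have c2: "x \<in> U - p2 ` R" using x B2 by simp
    show "p1 x = p2 x" using e unfolding if_P[OF c1] if_P[OF c2] .
  qed
  have finB: "finite B" unfolding B_def by simp
  have onA: "p1 x = p2 x" if x: "x \<in> A" for x
  proof -
    obtain i where i: "i \<in> {1..j}" "x = tau i" using x by auto
    have "rank A (p1 x) = rank A (p2 x)" using good_rankA[OF g1 i(1)] good_rankA[OF g2 i(1)] i by simp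
    moreover have "p1 x \<in> A" "p2 x \<in> A" using good_A[OF g1 i(1)] good_A[OF g2 i(1)] i by auto
    ultimately show ?thesis using rank_inj[of A] by (meson finite_imageI finite_atLeastAtMost inj_onD)
  qed
  have onR: "p1 x = p2 x" if x: "x \<in> R" for x
  proof -
    obtain i where i: "i \<in> {j+1..k}" "x = tau i" using x by auto
    have "rank B (p1 x) = rank B (p2 x)" using good_rankR[OF g1 i(1)] good_rankR[OF g2 i(1)] i B2
      unfolding B_def by simp
    moreover have "p1 x \<in> B" "p2 x \<in> B" using x B2 unfolding B_def by auto
    ultimately show ?thesis using rank_inj[OF finB] by (meson inj_onD)
  qed
  have onB: "p1 x = p2 x" if x: "x \<in> B" for x
  proof -
    obtain r where r: "r \<in> R" "x = p1 r" using x unfolding B_def by auto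
    have "x = p2 r" using onR[OF r(1)] r(2) by simp
    then show ?thesis using r good_pp[OF g1] good_pp[OF g2] by metis
  qed
  show "p1 = p2"
  proof
    fix x
    show "p1 x = p2 x"
    proof (cases "x \<in> {1..n}")
      case True
      then have "x \<in> A \<or> x \<in> R \<or> x \<in> B \<or> x \<in> U - B" using AR by auto
      then show ?thesis using onA onR onB qeq by blast
    next
      case False
      then show ?thesis using g1 g2 unfolding good_def by simp
    qed
  qed
qed

end

context pctx begin

lemma phi_surj:
  assumes sig: "involution (pattern j tau)" and BT: "(B, q) \<in> T"
  shows "(B, q) \<in> Phi ` Collect good"
proof -
  have BU: "B \<subseteq> U" and cB: "card B = k - j" and qp: "q permutes (U - B)" and qi: "involution q"
    using BT unfolding T_def by auto
  have finB: "finite B" using BU finite_subset by blast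
  have finA: "finite A" by simp
  define p where "p x = (if x \<in> A then enum A (inv tau x) else if x \<in> R then enum B (inv tau x - j)
     else if x \<in> B then tau (rank B x + j) else if x \<in> U - B then q x else x)" for x
  have BK: "x \<in> B \<Longrightarrow> x \<notin> {1..k}" for x using BU by auto
  have pA: "p (tau i) = enum A i" if i: "i \<in> {1..j}" for i using i tau_inv unfolding p_def by simp
  have pR: "p (tau i) = enum B (i - j)" if i: "i \<in> {j+1..k}" for i
  proof -
    have "tau i \<notin> A" using i tau_inj by (auto simp: inj_eq)
    moreover have "tau i \<in> R" using i by auto
    ultimately show ?thesis unfolding p_def using tau_inv by simp
  qed
  have pB: "p x = tau (rank B x + j)" if x: "x \<in> B" for x
  proof -
    have "x \<notin> A" "x \<notin> R" using BK[OF x] A_sub R_sub by auto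
    then show ?thesis using x unfolding p_def by simp
  qed
  have pC: "p x = q x" if x: "x \<in> U - B" for x
  proof -
    have "x \<notin> A" "x \<notin> R" using x A_sub R_sub by auto
    then show ?thesis using x unfolding p_def by simp
  qed
  have pO: "p x = x" if x: "x \<notin> {1..n}" for x
  proof -
    have h: "x \<notin> A" "x \<notin> R" "x \<notin> B" "x \<notin> U - B" using x A_sub R_sub BU kn by auto
    show ?thesis unfolding p_def if_not_P[OF h(1)] if_not_P[OF h(2)] if_not_P[OF h(3)] if_not_P[OF h(4)] ..
  qed
  have eA: "enum A i \<in> A" if "i \<in> {1..j}" for i using enum_in[OF finA] card_A that by simp
  have eB: "enum B i \<in> B" if "i \<in> {1..k-j}" for i using enum_in[OF finB] cB that by simp
  have pRB: "p (tau i) \<in> B" if i: "i \<in> {j+1..k}" for i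
  proof -
    have "i - j \<in> {1..k-j}" using i by auto
    then show ?thesis using pR[OF i] eB by simp
  qed
  have rB: "rank B x \<in> {1..k-j}" if "x \<in> B" for x using rank_range[OF finB that] cB by simp
  have pp: "p (p x) = x" for x
  proof -
    consider "x \<in> A" | "x \<in> R" | "x \<in> B" | "x \<in> U - B" | "x \<notin> {1..n}"
      using AR kn by fastforce
    then show ?thesis
    proof cases
      case 1
      then obtain i where i: "i \<in> {1..j}" "x = tau i" by auto
      have "enum A i \<in> A" using eA[OF i(1)] .
      then obtain m where m: "m \<in> {1..j}" "enum A i = tau m" by auto
      have "pattern j tau m = i" using pat_rank[OF m(1)] m(2)[symmetric] rank_enum[OF finA] card_A i(1)
        by simp
      then have "pattern j tau i = m" using inv_pp[OF sig, of m] by simp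
      then have "rank A (tau i) = m" using pat_rank[OF i(1)] by simp
      then have "enum A m = tau i" using enum_rank[OF finA] i(1) by force
      then show ?thesis using i pA m by simp
    next
      case 2
      then obtain i where i: "i \<in> {j+1..k}" "x = tau i" by auto
      have ij: "i - j \<in> {1..k-j}" using i by auto
      have "p (p x) = tau (rank B (enum B (i - j)) + j)" using pR[OF i(1)] pB[OF eB[OF ij]] i by simp
      also have "\<dots> = tau i" using rank_enum[OF finB, of "i - j"] cB ij i by simp
      finally show ?thesis using i by simp
    next
      case 3
      have r: "rank B x + j \<in> {j+1..k}" using rB[OF 3] by auto
      have "p (p x) = enum B (rank B x)" using pB[OF 3] pR[OF r] by simp
      then show ?thesis using enum_rank[OF finB 3] by simp
    next
      case 4
      have "q x \<in> U - B" using permutes_in_image[OF qp] 4 by simp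
      then show ?thesis using pC 4 inv_pp[OF qi] by simp
    next
      case 5
      then show ?thesis using pO by simp
    qed
  qed
  have inv: "involution p" by (rule involutionI) (rule pp)
  have mono: "strict_mono_on {1..k} (p \<circ> tau)"
    unfolding strict_mono_on_def
  proof (intro allI impI)
    fix r s assume a: "r \<in> {1..k} \<and> s \<in> {1..k} \<and> r < s"
    show "(p \<circ> tau) r < (p \<circ> tau) s"
    proof (cases "s \<le> j")
      case True
      then show ?thesis using a pA enum_less[OF finA, of r s] card_A by simp
    next
      case False
      then have s: "s \<in> {j+1..k}" using a by auto
      have "s - j \<in> {1..k-j}" using s by auto
      then have ps: "p (tau s) \<in> U" using pR[OF s] eB[of "s - j"] BU by auto
      show ?thesis
      proof (cases "r \<le> j")
        case True
        then have r1: "r \<in> {1..j}" using a by auto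
        have "p (tau r) \<in> {1..k}" using pA[OF r1] eA[OF r1] A_sub by auto
        then show ?thesis using ps by auto
      next
        case False
        then have r: "r \<in> {j+1..k}" using a by auto
        have "enum B (r - j) < enum B (s - j)"
          using enum_less[OF finB, of "r - j" "s - j"] cB r s a by auto
        then show ?thesis using pR[OF r] pR[OF s] by simp
      qed
    qed
  qed
  have cardK: "{x\<in>{1..k}. p x \<in> {1..k}} = A"
  proof (intro equalityI subsetI)
    fix x assume x: "x \<in> {x\<in>{1..k}. p x \<in> {1..k}}"
    show "x \<in> A"
    proof (rule ccontr)
      assume "x \<notin> A"
      then have "x \<in> R" using x AR by auto
      then obtain i where i: "i \<in> {j+1..k}" "x = tau i" by auto
      have "p x \<in> B" using pRB[OF i(1)] i by simp
      then show False using x BK by auto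
    qed
  next
    fix x assume x: "x \<in> A"
    then obtain i where i: "i \<in> {1..j}" "x = tau i" by auto
    have "p x \<in> A" using pA[OF i(1)] eA[OF i(1)] i(2) by simp
    then show "x \<in> {x\<in>{1..k}. p x \<in> {1..k}}" using x A_sub by blast
  qed
  have g: "good p" unfolding good_def using inv pO mono cardK card_A by auto
  have img: "p ` R = B"
  proof (rule card_subset_eq[OF finB])
    show "p ` R \<subseteq> B" using pRB by force
    show "card (p ` R) = card B" using card_R cB card_image[OF inj_on_subset[OF inv_inj[OF inv]]] by simp
  qed
  have "snd (Phi p) = q"
  proof
    fix x show "snd (Phi p) x = q x"
      unfolding Phi_def using img pC permutes_not_in[OF qp] by auto
  qed
  then have "Phi p = (B, q)" using img unfolding Phi_def by simp
  then show ?thesis using g by force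
qed

end

context pctx begin

lemma count:
  assumes sig: "involution (pattern j tau)"
  shows "card (Collect good) = ((n - k) choose (k - j)) * num_inv (n + j - 2 * k)"
proof -
  have "Phi ` Collect good = T"
  proof (intro equalityI subsetI)
    fix x assume "x \<in> Phi ` Collect good" then show "x \<in> T" using phi_in by auto
  next
    fix x assume x: "x \<in> T"
    obtain B q where "x = (B, q)" by (cases x)
    then show "x \<in> Phi ` Collect good" using phi_surj[OF sig] x by simp
  qed
  then have "bij_betw Phi (Collect good) T" using phi_inj unfolding bij_betw_def by simp
  then have "card (Collect good) = card T" by (rule bij_betw_same_card)
  also have "\<dots> = (\<Sum>B\<in>{B. B \<subseteq> U \<and> card B = k - j}. card {q. q permutes (U - B) \<and> involution q})"
    unfolding T_def
  proof (rule card_SigmaI)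
    show "finite {B. B \<subseteq> U \<and> card B = k - j}" by simp
    show "\<forall>a\<in>{B. B \<subseteq> U \<and> card B = k - j}. finite {q. q permutes U - a \<and> involution q}"
      using finite_permutations by (auto intro: finite_subset[of _ "{q. q permutes _}"])
  qed
  also have "\<dots> = (\<Sum>B\<in>{B. B \<subseteq> U \<and> card B = k - j}. num_inv (n + j - 2 * k))"
  proof (rule sum.cong[OF refl])
    fix B assume B: "B \<in> {B. B \<subseteq> U \<and> card B = k - j}"
    have "card (U - B) = card U - card B" using B by (intro card_Diff_subset) (auto intro: finite_subset)
    also have "\<dots> = n + j - 2 * k" using B jk by simp
    finally show "card {q. q permutes (U - B) \<and> involution q} = num_inv (n + j - 2 * k)"
      using card_inv_set[of "U - B"] by simp
  qed
  also have "\<dots> = ((n - k) choose (k - j)) * num_inv (n + j - 2 * k)"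
    using n_subsets[of U "k - j"] by simp
  finally show ?thesis .
qed

lemma empty:
  assumes "\<not> involution (pattern j tau)"
  shows "Collect good = {}"
  using good_pattern assms by blast

end

theorem mainTheorem2:
  fixes n k j :: nat and tau :: "nat \<Rightarrow> nat"
  assumes "tau permutes {1..k}" and "j \<le> k" and "k \<le> n"
  shows "card {p. p permutes {1..n} \<and> involution p \<and> contains_subseq n p k tau \<and>
                  card {x \<in> {1..k}. p x \<in> {1..k}} = j}
         = (if j = 0 \<or> (pattern j tau permutes {1..j} \<and> involution (pattern j tau))
            then ((n - k) choose (k - j)) * num_inv (n + j - 2 * k) else 0)"
proof -
  interpret pctx n k j tau using assms by unfold_locales
  have S: "{p. p permutes {1..n} \<and> involution p \<and> contains_subseq n p k tau \<and>
                  card {x \<in> {1..k}. p x \<in> {1..k}} = j} = Collect good"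
    using S_good by blast
  show ?thesis
  proof (cases "involution (pattern j tau)")
    case True
    have "pattern j tau permutes {1..j}"
      using inv_permutes[OF True] unfolding pattern_def by auto
    then show ?thesis unfolding S count[OF True] using True by simp
  next
    case False
    have "j \<noteq> 0"
    proof
      assume "j = 0"
      then have "pattern j tau = id" unfolding pattern_def by (auto simp: fun_eq_iff)
      then show False using False unfolding involution_def by simp
    qed
    then show ?thesis unfolding S empty[OF False] using False by simp
  qed
qed

end
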